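(* Let $\mathbf{v}$ be a random variable giving weak ignorability, i.e. for both $t\in\{0,1\}$, $\mathbf{y}(t)\perp\mathrm{t}\mid\mathbf{v}$ and $p(\mathrm{t}\mid\mathbf{v})>0$. If $\mathbb{P}_{\mathrm{t}}(\mathbf{v})$ is a Pt-score, then $\mathbf{y}(t)\perp\mathbf{v},\mathrm{t}\mid\mathbb{P}_t$ for both $t\in\{0,1\}$.
   Context: Potential outcomes framework: binary treatment $\mathrm{t}\in\{0,1\}$ and potential outcomes $\mathbf{y}(0),\mathbf{y}(1)$. A P0-score (resp. P1-score) of $\mathbf{v}$ is a function $\mathbb{P}(\mathbf{v})$ such that $\mathbf{y}(0)\perp\mathbf{v}\mid\mathbb{P}(\mathbf{v})$ (resp. $\mathbf{y}(1)\perp\mathbf{v}\mid\mathbb{P}(\mathbf{v})$). Given a P0-score $\mathbb{P}_0$ and a P1-score $\mathbb{P}_1$, the Pt-score is $\mathbb{P}_{\mathrm{t}}$, i.e. $\mathbb{P}_t$ when $\mathrm{t}=t$. *)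

theory Defs
  imports "HOL-Probability.Probability"
begin

definition gen_sigma :: "'a measure \<Rightarrow> ('a \<Rightarrow> 'c) \<Rightarrow> 'c measure \<Rightarrow> 'a measure" where
  "gen_sigma M Z MZ = vimage_algebra (space M) Z MZ"

definition cond_indep ::
  "'a measure \<Rightarrow> ('a \<Rightarrow> 'b) \<Rightarrow> 'b measure \<Rightarrow> ('a \<Rightarrow> 'd) \<Rightarrow> 'd measure
     \<Rightarrow> ('a \<Rightarrow> 'c) \<Rightarrow> 'c measure \<Rightarrow> bool" where
  "cond_indep M X MX W MW Z MZ \<longleftrightarrow>
     (\<forall>A\<in>sets MX. \<forall>B\<in>sets MW.
        AE \<omega> in M.
          real_cond_exp M (gen_sigma M Z MZ)
             (indicator (X -` A \<inter> W -` B \<inter> space M)) \<omega>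
          = real_cond_exp M (gen_sigma M Z MZ) (indicator (X -` A \<inter> space M)) \<omega>
            * real_cond_exp M (gen_sigma M Z MZ) (indicator (W -` B \<inter> space M)) \<omega>)"

end

theory Submission
  imports Defs
begin

lemma sfs_of:
  assumes "prob_space M" "subalgebra M F"
  shows "sigma_finite_subalgebra M F"
proof -
  interpret prob_space M by fact
  have "finite_measure_subalgebra M F"
    by (unfold_locales) (fact assms(2))
  then show ?thesis by (rule finite_measure_subalgebra_is_sigma_finite)
qed

lemma gen_sigma_subalg:
  assumes "V \<in> measurable M MV"
  shows "subalgebra M (gen_sigma M V MV)"
  unfolding subalgebra_def gen_sigma_def
  using assms by (auto simp: sets_vimage_algebra2 measurable_def)

lemma ind_int:
  assumes "prob_space M" "a \<in> sets M"
  shows "integrable M (indicator a :: _ \<Rightarrow> real)"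
proof -
  interpret prob_space M by fact
  show ?thesis using assms(2) by (intro integrable_real_indicator) (auto simp: less_top[symmetric])
qed

lemma int_ind_mult:
  fixes f :: "_ \<Rightarrow> real"
  assumes "a \<in> sets M" "integrable M f"
  shows "integrable M (\<lambda>x. indicator a x * f x)"
  using integrable_mult_indicator[OF assms] by simp

lemma cexp_bounds:
  assumes "prob_space M" "subalgebra M F" "a \<in> sets M"
  shows "AE x in M. \<bar>real_cond_exp M F (indicator a) x\<bar> \<le> 1"
proof -
  interpret sigma_finite_subalgebra M F using sfs_of assms by blast
  have i: "integrable M (indicator a :: _ \<Rightarrow> real)" using ind_int assms by blast
  have "AE x in M. real_cond_exp M F (indicator a) x \<le> 1"
    by (rule real_cond_exp_le_c[OF i]) (auto split: split_indicator)
  moreover have "AE x in M. real_cond_exp M F (indicator a) x \<ge> 0"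
    by (rule real_cond_exp_ge_c[OF i]) (auto split: split_indicator)
  ultimately show ?thesis by eventually_elim auto
qed

lemma step_a:
  assumes P: "prob_space M" and sV: "subalgebra M FV" and sS: "subalgebra FV FS"
    and a: "a \<in> sets M"
    and score: "\<And>c. c \<in> sets FV \<Longrightarrow> AE x in M.
        real_cond_exp M FS (\<lambda>x. indicator a x * indicator c x) x
        = real_cond_exp M FS (indicator a) x * real_cond_exp M FS (indicator c) x"
  shows "AE x in M. real_cond_exp M FV (indicator a) x = real_cond_exp M FS (indicator a) x"
proof -
  have sS': "subalgebra M FS" using sV sS unfolding subalgebra_def by auto
  have fV: "sigma_finite_subalgebra M FV" using sfs_of P sV by blast
  have fS: "sigma_finite_subalgebra M FS" using sfs_of P sS' by blast
  have ia: "integrable M (indicator a :: _ \<Rightarrow> real)" using ind_int P a by blast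
  have iS: "integrable M (real_cond_exp M FS (indicator a))"
    by (rule sigma_finite_subalgebra.real_cond_exp_int(1)[OF fS ia])
  show ?thesis
  proof (rule sigma_finite_subalgebra.real_cond_exp_charact[OF fV _ ia iS])
    show "real_cond_exp M FS (indicator a) \<in> borel_measurable FV"
      by (rule measurable_from_subalg[OF sS]) simp
  next
    fix c assume c: "c \<in> sets FV"
    have cM: "c \<in> sets M" using c sV unfolding subalgebra_def by auto
    have icM: "indicator c \<in> borel_measurable M" using cM by simp
    have iac: "integrable M (\<lambda>x. indicator a x * indicator c x :: real)"
      using int_ind_mult[OF a ind_int[OF P cM]] .
    have "(\<integral>x\<in>c. (indicator a x :: real) \<partial>M) = (\<integral>x. indicator a x * indicator c x \<partial>M)"
      unfolding set_lebesgue_integral_def by (intro Bochner_Integration.integral_cong) (auto split: split_indicator)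
    also have "\<dots> = (\<integral>x. real_cond_exp M FS (\<lambda>x. indicator a x * indicator c x) x \<partial>M)"
      by (rule sigma_finite_subalgebra.real_cond_exp_int(2)[OF fS iac, symmetric])
    also have "\<dots> = (\<integral>x. real_cond_exp M FS (indicator a) x * real_cond_exp M FS (indicator c) x \<partial>M)"
      by (rule integral_cong_AE) (use score[OF c] in auto)
    also have "\<dots> = (\<integral>x. real_cond_exp M FS (indicator a) x * indicator c x \<partial>M)"
    proof (rule sigma_finite_subalgebra.real_cond_exp_intg(2)[OF fS])
      show "integrable M (\<lambda>x. real_cond_exp M FS (indicator a) x * indicator c x)"
        using int_ind_mult[OF cM iS] by (simp add: mult.commute)
    qed (auto simp: icM)
    also have "\<dots> = (\<integral>x\<in>c. real_cond_exp M FS (indicator a) x \<partial>M)"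
      unfolding set_lebesgue_integral_def by (intro Bochner_Integration.integral_cong) (auto split: split_indicator)
    finally show "(\<integral>x\<in>c. indicator a x \<partial>M) = (\<integral>x\<in>c. real_cond_exp M FS (indicator a) x \<partial>M)" .
  qed
qed

lemma step_b:
  assumes P: "prob_space M" and sV: "subalgebra M FV" and sS: "subalgebra FV FS"
    and a: "a \<in> sets M" and c: "c \<in> sets FV" and e: "e \<in> sets M"
    and score: "\<And>c. c \<in> sets FV \<Longrightarrow> AE x in M.
        real_cond_exp M FS (\<lambda>x. indicator a x * indicator c x) x
        = real_cond_exp M FS (indicator a) x * real_cond_exp M FS (indicator c) x"
    and ign: "AE x in M.
        real_cond_exp M FV (\<lambda>x. indicator a x * indicator e x) x
        = real_cond_exp M FV (indicator a) x * real_cond_exp M FV (indicator e) x"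
  shows "AE x in M. real_cond_exp M FS (\<lambda>x. indicator a x * indicator c x * indicator e x) x
     = real_cond_exp M FS (indicator a) x * real_cond_exp M FS (\<lambda>x. indicator c x * indicator e x) x"
proof -
  have sS': "subalgebra M FS" using sV sS unfolding subalgebra_def by auto
  have fV: "sigma_finite_subalgebra M FV" using sfs_of P sV by blast
  have fS: "sigma_finite_subalgebra M FS" using sfs_of P sS' by blast
  have cM: "c \<in> sets M" using c sV unfolding subalgebra_def by auto
  have ia: "integrable M (indicator a :: _ \<Rightarrow> real)" using ind_int P a by blast
  have ie: "integrable M (indicator e :: _ \<Rightarrow> real)" using ind_int P e by blast
  have ice: "integrable M (\<lambda>x. indicator c x * indicator e x :: real)"
    using int_ind_mult[OF cM ie] .
  have iace: "integrable M (\<lambda>x. indicator a x * indicator c x * indicator e x :: real)"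
    using int_ind_mult[OF a ice] by (simp add: mult.assoc)
  have iS: "integrable M (real_cond_exp M FS (indicator a))"
    by (rule sigma_finite_subalgebra.real_cond_exp_int(1)[OF fS ia])
  have iSce: "integrable M (real_cond_exp M FS (\<lambda>x. indicator c x * indicator e x))"
    by (rule sigma_finite_subalgebra.real_cond_exp_int(1)[OF fS ice])
  have bnd: "AE x in M. \<bar>real_cond_exp M FS (indicator a) x\<bar> \<le> 1"
    using cexp_bounds[OF P sS' a] .
  have A: "AE x in M. real_cond_exp M FV (indicator a) x = real_cond_exp M FS (indicator a) x"
    using step_a[OF P sV sS a score] by blast
  have ig: "integrable M (\<lambda>x. real_cond_exp M FS (indicator a) x *
        real_cond_exp M FS (\<lambda>x. indicator c x * indicator e x) x)"
  proof (rule Bochner_Integration.integrable_bound[OF iSce])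
    show "AE x in M. norm (real_cond_exp M FS (indicator a) x *
        real_cond_exp M FS (\<lambda>x. indicator c x * indicator e x) x)
       \<le> norm (real_cond_exp M FS (\<lambda>x. indicator c x * indicator e x) x)"
      using bnd
    proof eventually_elim
      case (elim x)
      then show ?case by (simp add: abs_mult mult_left_le_one_le)
    qed
  qed simp
  show ?thesis
  proof (rule sigma_finite_subalgebra.real_cond_exp_charact[OF fS _ iace ig])
    show "(\<lambda>x. real_cond_exp M FS (indicator a) x *
        real_cond_exp M FS (\<lambda>x. indicator c x * indicator e x) x) \<in> borel_measurable FS"
      by simp
  next
    fix d assume d: "d \<in> sets FS"
    have dV: "d \<in> sets FV" using d sS unfolding subalgebra_def by auto
    have dM: "d \<in> sets M" using dV sV unfolding subalgebra_def by auto
    have mdcV: "(\<lambda>x. indicator d x * indicator c x :: real) \<in> borel_measurable FV"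
      using dV c by simp
    have mdcS: "(\<lambda>x. indicator d x * real_cond_exp M FS (indicator a) x) \<in> borel_measurable FS"
      using d by simp
    have mdcSV: "(\<lambda>x. indicator d x * indicator c x * real_cond_exp M FS (indicator a) x) \<in> borel_measurable FV"
    proof -
      have "real_cond_exp M FS (indicator a) \<in> borel_measurable FV"
        by (rule measurable_from_subalg[OF sS]) simp
      then show ?thesis using dV c by simp
    qed
    have "(\<integral>x\<in>d. (indicator a x * indicator c x * indicator e x :: real) \<partial>M)
        = (\<integral>x. (indicator d x * indicator c x) * (indicator a x * indicator e x) \<partial>M)"
      unfolding set_lebesgue_integral_def by (intro Bochner_Integration.integral_cong) (auto split: split_indicator)
    also have "\<dots> = (\<integral>x. (indicator d x * indicator c x) * real_cond_exp M FV (\<lambda>x. indicator a x * indicator e x) x \<partial>M)"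
    proof (rule sigma_finite_subalgebra.real_cond_exp_intg(2)[OF fV, symmetric])
      show "integrable M (\<lambda>x. indicator d x * indicator c x * (indicator a x * indicator e x) :: real)"
        using int_ind_mult[OF dM int_ind_mult[OF cM int_ind_mult[OF a ie]]] by (simp add: ac_simps)
    qed (use mdcV e a in auto)
    also have "\<dots> = (\<integral>x. (indicator d x * indicator c x) * (real_cond_exp M FS (indicator a) x * real_cond_exp M FV (indicator e) x) \<partial>M)"
      by (rule integral_cong_AE) (use ign A dM cM in auto)
    also have "\<dots> = (\<integral>x. (indicator d x * indicator c x * real_cond_exp M FS (indicator a) x) * real_cond_exp M FV (indicator e) x \<partial>M)"
      by (simp add: ac_simps)
    also have "\<dots> = (\<integral>x. (indicator d x * indicator c x * real_cond_exp M FS (indicator a) x) * indicator e x \<partial>M)"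
    proof (rule sigma_finite_subalgebra.real_cond_exp_intg(2)[OF fV])
      show "integrable M (\<lambda>x. indicator d x * indicator c x * real_cond_exp M FS (indicator a) x * indicator e x)"
        using int_ind_mult[OF dM int_ind_mult[OF cM int_ind_mult[OF e iS]]] by (simp add: ac_simps)
    qed (use mdcSV e in auto)
    also have "\<dots> = (\<integral>x. (indicator d x * real_cond_exp M FS (indicator a) x) * (indicator c x * indicator e x) \<partial>M)"
      by (simp add: ac_simps)
    also have "\<dots> = (\<integral>x. (indicator d x * real_cond_exp M FS (indicator a) x) * real_cond_exp M FS (\<lambda>x. indicator c x * indicator e x) x \<partial>M)"
    proof (rule sigma_finite_subalgebra.real_cond_exp_intg(2)[OF fS, symmetric])
      show "integrable M (\<lambda>x. indicator d x * real_cond_exp M FS (indicator a) x * (indicator c x * indicator e x))"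
        using int_ind_mult[OF dM int_ind_mult[OF cM int_ind_mult[OF e iS]]] by (simp add: ac_simps)
    qed (use mdcS cM e in auto)
    also have "\<dots> = (\<integral>x\<in>d. real_cond_exp M FS (indicator a) x * real_cond_exp M FS (\<lambda>x. indicator c x * indicator e x) x \<partial>M)"
      unfolding set_lebesgue_integral_def by (intro Bochner_Integration.integral_cong) (auto split: split_indicator)
    finally show "(\<integral>x\<in>d. (indicator a x * indicator c x * indicator e x :: real) \<partial>M) = (\<integral>x\<in>d. real_cond_exp M FS (indicator a) x * real_cond_exp M FS (\<lambda>x. indicator c x * indicator e x) x \<partial>M)" .
  qed
qed

theorem proposition1:
  fixes M :: "'a measure"
    and Y :: "bool \<Rightarrow> 'a \<Rightarrow> 'y" and MY :: "'y measure"
    and T :: "'a \<Rightarrow> bool"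
    and V :: "'a \<Rightarrow> 'v" and MV :: "'v measure"
    and P :: "bool \<Rightarrow> 'v \<Rightarrow> 's" and MS :: "'s measure"
  assumes prob: "prob_space M"
    and Y_meas: "\<And>t. Y t \<in> measurable M MY"
    and T_meas: "T \<in> measurable M (count_space UNIV)"
    and V_meas: "V \<in> measurable M MV"
    and P_meas: "\<And>t. P t \<in> measurable MV MS"
    and ignorability: "\<And>t. cond_indep M (Y t) MY T (count_space UNIV) V MV"
    and overlap: "\<And>t. AE \<omega> in M.
                    real_cond_exp M (gen_sigma M V MV) (indicator (T -` {t} \<inter> space M)) \<omega> > 0"
    and score: "\<And>t. cond_indep M (Y t) MY V MV (\<lambda>\<omega>. P t (V \<omega>)) MS"
  shows "\<forall>t. cond_indep M (Y t) MY (\<lambda>\<omega>. (V \<omega>, T \<omega>)) (MV \<Otimes>\<^sub>M count_space UNIV)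
                (\<lambda>\<omega>. P t (V \<omega>)) MS"
proof (intro allI)
  fix t
  define X where "X = Y t"
  define S where "S = (\<lambda>\<omega>. P t (V \<omega>))"
  define FV where "FV = gen_sigma M V MV"
  define FS where "FS = gen_sigma M S MS"
  have Xm: "X \<in> measurable M MY" unfolding X_def by (rule Y_meas)
  have Sm: "S \<in> measurable M MS" unfolding S_def using V_meas P_meas by measurable
  have sV: "subalgebra M FV" unfolding FV_def by (rule gen_sigma_subalg[OF V_meas])
  have sS': "subalgebra M FS" unfolding FS_def by (rule gen_sigma_subalg[OF Sm])
  have setsV: "sets FV = {V -` C \<inter> space M | C. C \<in> sets MV}"
    unfolding FV_def gen_sigma_def using V_meas by (intro sets_vimage_algebra2) (auto simp: measurable_def)
  have setsS: "sets FS = {S -` E \<inter> space M | E. E \<in> sets MS}"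
    unfolding FS_def gen_sigma_def using Sm by (intro sets_vimage_algebra2) (auto simp: measurable_def)
  have sS: "subalgebra FV FS"
    unfolding subalgebra_def
  proof
    show "space FS = space FV" using sV sS' unfolding subalgebra_def by simp
    show "sets FS \<subseteq> sets FV"
    proof
      fix d assume "d \<in> sets FS"
      then obtain E where E: "E \<in> sets MS" "d = S -` E \<inter> space M" using setsS by auto
      have "P t -` E \<inter> space MV \<in> sets MV" using P_meas E(1) by (rule measurable_sets)
      moreover have "d = V -` (P t -` E \<inter> space MV) \<inter> space M"
        using E(2) V_meas unfolding S_def by (auto simp: measurable_def)
      ultimately show "d \<in> sets FV" using setsV by (metis (mono_tags, lifting) mem_Collect_eq)
    qed
  qed
  have fS: "sigma_finite_subalgebra M FS" using sfs_of prob sS' by blast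
  show "cond_indep M (Y t) MY (\<lambda>\<omega>. (V \<omega>, T \<omega>)) (MV \<Otimes>\<^sub>M count_space UNIV) (\<lambda>\<omega>. P t (V \<omega>)) MS"
    unfolding cond_indep_def X_def[symmetric] S_def[symmetric] FS_def[symmetric]
  proof (intro ballI)
    fix A B assume A: "A \<in> sets MY" and B: "B \<in> sets (MV \<Otimes>\<^sub>M count_space (UNIV :: bool set))"
    define a where "a = X -` A \<inter> space M"
    have aM: "a \<in> sets M" unfolding a_def using Xm A by (rule measurable_sets)
    have sc: "AE x in M.
        real_cond_exp M FS (\<lambda>x. indicator a x * indicator c x) x
        = real_cond_exp M FS (indicator a) x * real_cond_exp M FS (indicator c) x"
      if c: "c \<in> sets FV" for c
    proof -
      obtain C where C: "C \<in> sets MV" "c = V -` C \<inter> space M" using c setsV by auto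
      have eq: "indicator (X -` A \<inter> V -` C \<inter> space M) = (\<lambda>x. indicator a x * indicator c x :: real)"
        unfolding a_def C(2) by (auto split: split_indicator)
      have h: "AE x in M. real_cond_exp M FS (indicator (X -` A \<inter> V -` C \<inter> space M)) x
         = real_cond_exp M FS (indicator (X -` A \<inter> space M)) x * real_cond_exp M FS (indicator (V -` C \<inter> space M)) x"
        using score[of t] A C unfolding cond_indep_def
        by (auto simp: X_def[symmetric] S_def[symmetric] FS_def[symmetric])
      show ?thesis using h unfolding eq a_def[symmetric] C(2)[symmetric] .
    qed
    define e where "e = (\<lambda>b. T -` {b} \<inter> space M)"
    have eM: "e b \<in> sets M" for b :: bool unfolding e_def using T_meas by (rule measurable_sets) simp
    have ig: "AE x in M.
        real_cond_exp M FV (\<lambda>x. indicator a x * indicator (e b) x) x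
        = real_cond_exp M FV (indicator a) x * real_cond_exp M FV (indicator (e b)) x" for b :: bool
    proof -
      have eq: "indicator (X -` A \<inter> T -` {b} \<inter> space M) = (\<lambda>x. indicator a x * indicator (e b) x :: real)"
        unfolding a_def e_def by (auto split: split_indicator)
      have h: "AE x in M. real_cond_exp M FV (indicator (X -` A \<inter> T -` {b} \<inter> space M)) x
         = real_cond_exp M FV (indicator (X -` A \<inter> space M)) x * real_cond_exp M FV (indicator (T -` {b} \<inter> space M)) x"
        using ignorability[of t] A unfolding cond_indep_def
        by (auto simp: X_def[symmetric] FV_def[symmetric])
      show ?thesis using h unfolding eq a_def[symmetric] e_def .
    qed
    define C where "C = (\<lambda>b. (\<lambda>v. (v, b)) -` B \<inter> space MV)"
    have CM: "C b \<in> sets MV" for b :: bool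
    proof -
      have "(\<lambda>v. (v, b)) \<in> measurable MV (MV \<Otimes>\<^sub>M count_space UNIV)" by simp
      then show ?thesis unfolding C_def using B by (rule measurable_sets)
    qed
    define c where "c = (\<lambda>b. V -` C b \<inter> space M)"
    have cV: "c b \<in> sets FV" for b :: bool unfolding c_def using setsV CM by auto
    have cM: "c b \<in> sets M" for b :: bool using cV sV unfolding subalgebra_def by auto
    have key: "AE x in M. real_cond_exp M FS (\<lambda>x. indicator a x * indicator (c b) x * indicator (e b) x) x
       = real_cond_exp M FS (indicator a) x * real_cond_exp M FS (\<lambda>x. indicator (c b) x * indicator (e b) x) x" for b :: bool
      by (rule step_b[OF prob sV sS aM cV eM sc ig])
    have eqW: "indicator ((\<lambda>\<omega>. (V \<omega>, T \<omega>)) -` B \<inter> space M)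
      = (\<lambda>x. indicator (c True) x * indicator (e True) x + indicator (c False) x * indicator (e False) x :: real)"
    proof
      fix x
      show "indicator ((\<lambda>\<omega>. (V \<omega>, T \<omega>)) -` B \<inter> space M) x
        = (indicator (c True) x * indicator (e True) x + indicator (c False) x * indicator (e False) x :: real)"
        using measurable_space[OF V_meas, of x]
        by (cases "T x") (auto simp: c_def e_def C_def split: split_indicator)
    qed
    have eqXW: "indicator (X -` A \<inter> (\<lambda>\<omega>. (V \<omega>, T \<omega>)) -` B \<inter> space M)
      = (\<lambda>x. indicator a x * indicator (c True) x * indicator (e True) x
           + indicator a x * indicator (c False) x * indicator (e False) x :: real)"
    proof
      fix x
      show "indicator (X -` A \<inter> (\<lambda>\<omega>. (V \<omega>, T \<omega>)) -` B \<inter> space M) x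
        = (indicator a x * indicator (c True) x * indicator (e True) x
           + indicator a x * indicator (c False) x * indicator (e False) x :: real)"
        using measurable_space[OF V_meas, of x]
        by (cases "T x") (auto simp: a_def c_def e_def C_def split: split_indicator)
    qed
    have int3: "integrable M (\<lambda>x. indicator a x * indicator (c b) x * indicator (e b) x :: real)" for b :: bool
      using int_ind_mult[OF aM int_ind_mult[OF cM ind_int[OF prob eM]]] by (simp add: mult.assoc)
    have int2: "integrable M (\<lambda>x. indicator (c b) x * indicator (e b) x :: real)" for b :: bool
      using int_ind_mult[OF cM ind_int[OF prob eM]] .
    have add1: "AE x in M. real_cond_exp M FS (indicator (X -` A \<inter> (\<lambda>\<omega>. (V \<omega>, T \<omega>)) -` B \<inter> space M)) x
       = real_cond_exp M FS (\<lambda>x. indicator a x * indicator (c True) x * indicator (e True) x) x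
        + real_cond_exp M FS (\<lambda>x. indicator a x * indicator (c False) x * indicator (e False) x) x"
      unfolding eqXW by (rule sigma_finite_subalgebra.real_cond_exp_add[OF fS int3 int3])
    have add2: "AE x in M. real_cond_exp M FS (indicator ((\<lambda>\<omega>. (V \<omega>, T \<omega>)) -` B \<inter> space M)) x
       = real_cond_exp M FS (\<lambda>x. indicator (c True) x * indicator (e True) x) x
        + real_cond_exp M FS (\<lambda>x. indicator (c False) x * indicator (e False) x) x"
      unfolding eqW by (rule sigma_finite_subalgebra.real_cond_exp_add[OF fS int2 int2])
    show "AE \<omega> in M. real_cond_exp M FS (indicator (X -` A \<inter> (\<lambda>\<omega>. (V \<omega>, T \<omega>)) -` B \<inter> space M)) \<omega>
        = real_cond_exp M FS (indicator (X -` A \<inter> space M)) \<omega> *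
          real_cond_exp M FS (indicator ((\<lambda>\<omega>. (V \<omega>, T \<omega>)) -` B \<inter> space M)) \<omega>"
      using add1 add2 key[of True] key[of False] unfolding a_def[symmetric]
      by eventually_elim (simp add: distrib_left)
  qed
qed

end
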